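(* Let $G=(V,E,C,\ell)$ be an edge-labeled hypergraph with exactly two categories $C=\{c_1,c_2\}$. Construct a directed graph $G'=(V',E')$ with unit arc capacities as follows. $V'$ consists of $V$, two terminal nodes $s$ and $t$, and one new auxiliary node $u_e$ for each hyperedge $e\in E$. For each hyperedge $e=\{v_1,\dots,v_r\}\in E$: if $\ell(e)=c_1$, add the arcs $(s,u_e),(u_e,v_1),\dots,(u_e,v_r)$; if $\ell(e)=c_2$, add the arcs $(u_e,t),(v_1,u_e),\dots,(v_r,u_e)$. Let $S^*\subseteq V'$ with $s\in S^*$, $t\notin S^*$ be a minimum $s$-$t$ cut, i.e. a set minimizing the number of arcs $(a,b)\in E'$ with $a\in S^*$, $b\notin S^*$ among all subsets of $V'$ containing $s$ and not $t$. Define $Y:V\to C$ by $Y[i]=c_1$ if $i\in S^*$ and $Y[i]=c_2$ if $i\notin S^*$. Then $Y$ minimizes $\mathrm{CatEdgeClus}$ over all clusterings $V\to C$.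
   Context: An edge-labeled hypergraph $G=(V,E,C,\ell)$ consists of a finite node set $V$, a finite collection $E$ of hyperedges (nonempty subsets of $V$), a finite set $C$ of categories, and a labeling $\ell:E\to C$. A clustering is a map $Y:V\to C$. For $e\in E$, $m_Y(e)=1$ if $Y[i]\neq\ell(e)$ for some $i\in e$, and $m_Y(e)=0$ otherwise. The Categorical Edge Clustering objective is $\mathrm{CatEdgeClus}(Y)=\sum_{e\in E}m_Y(e)$. *)

theory Defs
  imports Main
begin

text \<open>Edge-labeled hypergraph: node set V, hyperedges indexed by a finite index
set E (so a collection may contain repeated hyperedges), hyperedge map hedge,
category set C, labeling lab.\<close>

definition edge_labeled_hypergraph ::
  "'v set \<Rightarrow> 'e set \<Rightarrow> ('e \<Rightarrow> 'v set) \<Rightarrow> 'c set \<Rightarrow> ('e \<Rightarrow> 'c) \<Rightarrow> bool" where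
  "edge_labeled_hypergraph V E hedge C lab \<longleftrightarrow>
     finite V \<and> finite E \<and> finite C \<and>
     (\<forall>e\<in>E. hedge e \<noteq> {} \<and> hedge e \<subseteq> V) \<and> (\<forall>e\<in>E. lab e \<in> C)"

definition is_clustering :: "'v set \<Rightarrow> 'c set \<Rightarrow> ('v \<Rightarrow> 'c) \<Rightarrow> bool" where
  "is_clustering V C Y \<longleftrightarrow> (\<forall>i\<in>V. Y i \<in> C)"

definition mistake :: "('e \<Rightarrow> 'v set) \<Rightarrow> ('e \<Rightarrow> 'c) \<Rightarrow> ('v \<Rightarrow> 'c) \<Rightarrow> 'e \<Rightarrow> nat" where
  "mistake hedge lab Y e = (if \<exists>i\<in>hedge e. Y i \<noteq> lab e then 1 else 0)"

definition CatEdgeClus :: "'e set \<Rightarrow> ('e \<Rightarrow> 'v set) \<Rightarrow> ('e \<Rightarrow> 'c) \<Rightarrow> ('v \<Rightarrow> 'c) \<Rightarrow> nat" where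
  "CatEdgeClus E hedge lab Y = (\<Sum>e\<in>E. mistake hedge lab Y e)"

datatype ('v, 'e) cnode = Orig 'v | Src | Snk | Aux 'e

definition cut_nodes :: "'v set \<Rightarrow> 'e set \<Rightarrow> ('v, 'e) cnode set" where
  "cut_nodes V E = Orig ` V \<union> {Src, Snk} \<union> Aux ` E"

definition cut_arcs :: "'e set \<Rightarrow> ('e \<Rightarrow> 'v set) \<Rightarrow> ('e \<Rightarrow> 'c) \<Rightarrow> 'c \<Rightarrow> 'c
    \<Rightarrow> (('v, 'e) cnode \<times> ('v, 'e) cnode) set" where
  "cut_arcs E hedge lab c1 c2 =
     {(Src, Aux e) | e. e \<in> E \<and> lab e = c1}
   \<union> {(Aux e, Orig v) | e v. e \<in> E \<and> lab e = c1 \<and> v \<in> hedge e}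
   \<union> {(Aux e, Snk) | e. e \<in> E \<and> lab e = c2}
   \<union> {(Orig v, Aux e) | e v. e \<in> E \<and> lab e = c2 \<and> v \<in> hedge e}"

definition cut_value :: "('n \<times> 'n) set \<Rightarrow> 'n set \<Rightarrow> nat" where
  "cut_value A S = card {(a, b). (a, b) \<in> A \<and> a \<in> S \<and> b \<notin> S}"

definition is_st_cut :: "'n set \<Rightarrow> 'n \<Rightarrow> 'n \<Rightarrow> 'n set \<Rightarrow> bool" where
  "is_st_cut N s t S \<longleftrightarrow> S \<subseteq> N \<and> s \<in> S \<and> t \<notin> S"

definition is_min_st_cut :: "'n set \<Rightarrow> ('n \<times> 'n) set \<Rightarrow> 'n \<Rightarrow> 'n \<Rightarrow> 'n set \<Rightarrow> bool" where
  "is_min_st_cut N A s t S \<longleftrightarrow> is_st_cut N s t S \<and>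
     (\<forall>S'. is_st_cut N s t S' \<longrightarrow> cut_value A S \<le> cut_value A S')"

end

theory Submission
  imports Defs
begin

lemma cat_card:
  assumes "finite E" shows "CatEdgeClus E hedge lab Y = card {e\<in>E. \<exists>i\<in>hedge e. Y i \<noteq> lab e}"
  unfolding CatEdgeClus_def mistake_def
  using assms by (simp add: sum.If_cases Int_def)

lemma arcs_fin:
  assumes "finite V" "finite E" "\<forall>e\<in>E. hedge e \<subseteq> V"
  shows "finite (cut_arcs E hedge lab c1 c2)"
proof -
  have "cut_arcs E hedge lab c1 c2 \<subseteq> cut_nodes V E \<times> cut_nodes V E"
    using assms(3) unfolding cut_arcs_def cut_nodes_def by auto
  moreover have "finite (cut_nodes V E)" using assms unfolding cut_nodes_def by auto
  ultimately show ?thesis by (meson finite_SigmaI finite_subset)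
qed

lemma arc_aux_unique:
  "a \<in> cut_arcs E hedge lab c1 c2 \<Longrightarrow> (fst a = Aux e1 \<or> snd a = Aux e1) \<Longrightarrow>
   (fst a = Aux e2 \<or> snd a = Aux e2) \<Longrightarrow> e1 = e2"
  unfolding cut_arcs_def by auto

lemma memK: "(a \<in> {(x, y). P x y}) = P (fst a) (snd a)"
  by (cases a) simp

lemma lower:
  assumes fin: "finite (cut_arcs E hedge lab c1 c2)"
    and lab: "\<forall>e\<in>E. lab e = c1 \<or> lab e = c2" and c: "c1 \<noteq> c2"
    and fE: "finite E" and st: "Src \<in> S" "Snk \<notin> S"
  shows "CatEdgeClus E hedge lab (\<lambda>i. if Orig i \<in> S then c1 else c2)
     \<le> cut_value (cut_arcs E hedge lab c1 c2) S"
proof -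
  let ?A = "cut_arcs E hedge lab c1 c2"
  let ?K = "{(a, b). (a, b) \<in> ?A \<and> a \<in> S \<and> b \<notin> S}"
  let ?Y = "\<lambda>i. if Orig i \<in> S then c1 else c2"
  let ?M = "{e\<in>E. \<exists>i\<in>hedge e. ?Y i \<noteq> lab e}"
  have ex: "\<exists>a. a \<in> ?K \<and> (fst a = Aux e \<or> snd a = Aux e)" if "e \<in> ?M" for e
  proof -
    from that obtain i where e: "e \<in> E" and i: "i \<in> hedge e" "?Y i \<noteq> lab e" by auto
    show ?thesis
    proof (cases "lab e = c1")
      case True
      then have iS: "Orig i \<notin> S" using i by auto
      show ?thesis
      proof (cases "Aux e \<in> S")
        case True
        then show ?thesis using iS e i \<open>lab e = c1\<close>
          by (rule_tac x="(Aux e, Orig i)" in exI) (auto simp: cut_arcs_def)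
      next
        case False
        then show ?thesis using st e \<open>lab e = c1\<close>
          by (rule_tac x="(Src, Aux e)" in exI) (auto simp: cut_arcs_def)
      qed
    next
      case False
      then have l2: "lab e = c2" using lab e by auto
      then have iS: "Orig i \<in> S" using i c by (auto split: if_splits)
      show ?thesis
      proof (cases "Aux e \<in> S")
        case True
        then show ?thesis using st e l2
          by (rule_tac x="(Aux e, Snk)" in exI) (auto simp: cut_arcs_def)
      next
        case False
        then show ?thesis using iS e i l2
          by (rule_tac x="(Orig i, Aux e)" in exI) (auto simp: cut_arcs_def)
      qed
    qed
  qed
  define g where "g e = (SOME a. a \<in> ?K \<and> (fst a = Aux e \<or> snd a = Aux e))" for e
  have g: "g e \<in> ?K \<and> (fst (g e) = Aux e \<or> snd (g e) = Aux e)" if "e \<in> ?M" for e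
    unfolding g_def using someI_ex[OF ex[OF that]] .
  have inj: "inj_on g ?M"
  proof (rule inj_onI)
    fix x y assume "x \<in> ?M" "y \<in> ?M" "g x = g y"
    then show "x = y" using g[of x] g[of y] arc_aux_unique[of "g x" E hedge lab c1 c2 x y]
      by auto
  qed
  have "g ` ?M \<subseteq> ?K"
  proof (rule image_subsetI)
    fix e assume "e \<in> ?M"
    from g[OF this] show "g e \<in> ?K" by (rule conjunct1)
  qed
  moreover have "finite ?K" using fin by (rule rev_finite_subset) auto
  ultimately have "card ?M \<le> card ?K" using card_inj_on_le[OF inj] by blast
  then show ?thesis unfolding cat_card[OF fE] cut_value_def .
qed

lemma upper:
  fixes V :: "'v set" and E :: "'e set" and hedge :: "'e \<Rightarrow> 'v set" and lab :: "'e \<Rightarrow> 'c"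
    and Y :: "'v \<Rightarrow> 'c"
  assumes "finite E" and hV: "\<forall>e\<in>E. hedge e \<subseteq> V" and cc: "c1 \<noteq> c2"
  shows "cut_value (cut_arcs E hedge lab c1 c2)
     ({Src} \<union> {Orig v | v. v \<in> V \<and> Y v = c1}
      \<union> {Aux e | e. e \<in> E \<and> lab e = c1 \<and> (\<forall>v\<in>hedge e. Y v = c1)}
      \<union> {Aux e | e. e \<in> E \<and> lab e = c2 \<and> (\<exists>v\<in>hedge e. Y v = c1)})
     \<le> CatEdgeClus E hedge lab Y"
proof -
  let ?S = "{Src} \<union> {Orig v | v. v \<in> V \<and> Y v = c1}
      \<union> {Aux e | e. e \<in> E \<and> lab e = c1 \<and> (\<forall>v\<in>hedge e. Y v = c1)}
      \<union> {Aux e | e. e \<in> E \<and> lab e = c2 \<and> (\<exists>v\<in>hedge e. Y v = c1)}"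
  let ?K = "{(a, b). (a, b) \<in> cut_arcs E hedge lab c1 c2 \<and> a \<in> ?S \<and> b \<notin> ?S}"
  let ?M = "{e\<in>E. \<exists>i\<in>hedge e. Y i \<noteq> lab e}"
  define f :: "'e \<Rightarrow> ('v,'e) cnode \<times> ('v,'e) cnode" where "f e = (if lab e = c1 then (Src, Aux e) else (Aux e, Snk))" for e
  have "?K \<subseteq> f ` ?M"
  proof
    fix a assume a: "a \<in> ?K"
    then have aK: "(fst a, snd a) \<in> cut_arcs E hedge lab c1 c2 \<and> fst a \<in> ?S \<and> snd a \<notin> ?S"
      by (rule memK[THEN iffD1])
    have aA: "a \<in> cut_arcs E hedge lab c1 c2"
      using conjunct1[OF aK] by (simp only: prod.collapse)
    have aS: "fst a \<in> ?S" "snd a \<notin> ?S"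
      using aK by (rule conjunct1[OF conjunct2], rule conjunct2[OF conjunct2])
    from aA consider
        (A) e where "a = (Src, Aux e)" "e \<in> E" "lab e = c1"
      | (B) e v where "a = (Aux e, Orig v)" "e \<in> E" "lab e = c1" "v \<in> hedge e"
      | (C) e where "a = (Aux e, Snk)" "e \<in> E" "lab e = c2"
      | (D) e v where "a = (Orig v, Aux e)" "e \<in> E" "lab e = c2" "v \<in> hedge e"
      unfolding cut_arcs_def by blast
    then show "a \<in> f ` ?M"
    proof cases
      case (A e)
      then have "e \<in> ?M" using aS by auto
      then show ?thesis using A by (auto simp: f_def)
    next
      case (B e v)
      then show ?thesis using aS hV cc by auto
    next
      case (C e)
      then have "e \<in> ?M" using aS cc by auto
      moreover have "lab e \<noteq> c1" using C cc by auto
      ultimately show ?thesis using C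
        by (auto simp: f_def image_iff)
    next
      case (D e v)
      then show ?thesis using aS hV cc by auto
    qed
  qed
  moreover have "finite ?M" using assms(1) by auto
  ultimately have "card ?K \<le> card ?M"
    by (meson card_image_le card_mono finite_imageI order_trans)
  then show ?thesis unfolding cat_card[OF assms(1)] cut_value_def .
qed

theorem mainTheorem2:
  fixes V :: "'v set" and E :: "'e set" and hedge :: "'e \<Rightarrow> 'v set"
    and C :: "'c set" and lab :: "'e \<Rightarrow> 'c" and c1 c2 :: 'c
    and S :: "('v, 'e) cnode set"
  assumes "edge_labeled_hypergraph V E hedge C lab"
    and "C = {c1, c2}" and "c1 \<noteq> c2"
    and "is_min_st_cut (cut_nodes V E) (cut_arcs E hedge lab c1 c2) Src Snk S"
  shows "is_clustering V C (\<lambda>i. if Orig i \<in> S then c1 else c2) \<and>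
    (\<forall>Y'. is_clustering V C Y' \<longrightarrow>
       CatEdgeClus E hedge lab (\<lambda>i. if Orig i \<in> S then c1 else c2)
         \<le> CatEdgeClus E hedge lab Y')"
proof -
  note h = assms(1)[unfolded edge_labeled_hypergraph_def]
  have lab: "\<forall>e\<in>E. lab e = c1 \<or> lab e = c2" using h assms(2) by auto
  have fin: "finite (cut_arcs E hedge lab c1 c2)" using h by (intro arcs_fin) auto
  have mc: "Src \<in> S" "Snk \<notin> S" using assms(4) unfolding is_min_st_cut_def is_st_cut_def by auto
  have L: "CatEdgeClus E hedge lab (\<lambda>i. if Orig i \<in> S then c1 else c2)
     \<le> cut_value (cut_arcs E hedge lab c1 c2) S"
    using lower[OF fin lab assms(3)] h mc by blast
  show ?thesis
  proof (intro conjI allI impI)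
    show "is_clustering V C (\<lambda>i. if Orig i \<in> S then c1 else c2)"
      using assms(2) by (auto simp: is_clustering_def)
  next
    fix Y' assume "is_clustering V C Y'"
    let ?S = "{Src} \<union> {Orig v | v. v \<in> V \<and> Y' v = c1}
      \<union> {Aux e | e. e \<in> E \<and> lab e = c1 \<and> (\<forall>v\<in>hedge e. Y' v = c1)}
      \<union> {Aux e | e. e \<in> E \<and> lab e = c2 \<and> (\<exists>v\<in>hedge e. Y' v = c1)}"
    have "is_st_cut (cut_nodes V E) Src Snk ?S"
      unfolding is_st_cut_def cut_nodes_def by auto
    then have "cut_value (cut_arcs E hedge lab c1 c2) S \<le> cut_value (cut_arcs E hedge lab c1 c2) ?S"
      using assms(4) unfolding is_min_st_cut_def by blast
    also have "\<dots> \<le> CatEdgeClus E hedge lab Y'"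
      using upper[of E hedge V c1 c2 lab Y'] h assms(3) by blast
    finally show "CatEdgeClus E hedge lab (\<lambda>i. if Orig i \<in> S then c1 else c2) \<le> CatEdgeClus E hedge lab Y'"
      using L by linarith
  qed
qed

end
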